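(* Let $G=(V,E)$ be a finite connected multigraph and let $F,F'$ be spanning 2-forests of $G$. Then the following are equivalent: (1) $F$ and $F'$ are not vertex equivalent; (2) there exists an edge $e\in E(F')$ such that the spanning subgraph with edge set $E(F)\cup\{e\}$ is a tree.
   Context: A spanning 2-forest of $G$ is a subgraph with vertex set $V$, without cycles, having exactly two connected components. For a spanning 2-forest $F$, $\mathcal{P}(F)=\{X,Y\}$ denotes the partition of $V$ into the vertex sets of the two connected components of $F$. Two spanning 2-forests $F,F'$ are vertex equivalent if $\mathcal{P}(F)=\mathcal{P}(F')$. *)

theory Defs
  imports Main
begin

text \<open>A finite multigraph (loops and parallel edges allowed) is given by a vertex
set V, an edge set E and an endpoint map ends; ends e = (u,v) means e joins u and v
(orientation irrelevant). Spanning subgraphs are identified with their edge sets.\<close>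

definition multigraph :: "'v set \<Rightarrow> 'e set \<Rightarrow> ('e \<Rightarrow> 'v \<times> 'v) \<Rightarrow> bool" where
  "multigraph V E ends \<longleftrightarrow> finite V \<and> finite E \<and>
     (\<forall>e\<in>E. fst (ends e) \<in> V \<and> snd (ends e) \<in> V)"

definition joins :: "('e \<Rightarrow> 'v \<times> 'v) \<Rightarrow> 'e \<Rightarrow> 'v \<Rightarrow> 'v \<Rightarrow> bool" where
  "joins ends e u v \<longleftrightarrow> ends e = (u, v) \<or> ends e = (v, u)"

definition adj_rel :: "('e \<Rightarrow> 'v \<times> 'v) \<Rightarrow> 'e set \<Rightarrow> ('v \<times> 'v) set" where
  "adj_rel ends F = {(u, v). \<exists>e\<in>F. joins ends e u v}"

definition conn :: "'v set \<Rightarrow> ('e \<Rightarrow> 'v \<times> 'v) \<Rightarrow> 'e set \<Rightarrow> ('v \<times> 'v) set" where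
  "conn V ends F = {(u, v). u \<in> V \<and> v \<in> V \<and> (u, v) \<in> (adj_rel ends F)\<^sup>*}"

definition components :: "'v set \<Rightarrow> ('e \<Rightarrow> 'v \<times> 'v) \<Rightarrow> 'e set \<Rightarrow> 'v set set" where
  "components V ends F = V // conn V ends F"

definition is_connected :: "'v set \<Rightarrow> ('e \<Rightarrow> 'v \<times> 'v) \<Rightarrow> 'e set \<Rightarrow> bool" where
  "is_connected V ends F \<longleftrightarrow> V \<noteq> {} \<and> (\<forall>u\<in>V. \<forall>v\<in>V. (u, v) \<in> conn V ends F)"

definition has_cycle :: "('e \<Rightarrow> 'v \<times> 'v) \<Rightarrow> 'e set \<Rightarrow> bool" where
  "has_cycle ends F \<longleftrightarrow> (\<exists>es vs. es \<noteq> [] \<and> length vs = Suc (length es) \<and>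
      distinct es \<and> set es \<subseteq> F \<and> hd vs = last vs \<and> distinct (butlast vs) \<and>
      (\<forall>i < length es. joins ends (es ! i) (vs ! i) (vs ! Suc i)))"

definition is_forest :: "('e \<Rightarrow> 'v \<times> 'v) \<Rightarrow> 'e set \<Rightarrow> bool" where
  "is_forest ends F \<longleftrightarrow> \<not> has_cycle ends F"

definition spanning_tree :: "'v set \<Rightarrow> 'e set \<Rightarrow> ('e \<Rightarrow> 'v \<times> 'v) \<Rightarrow> 'e set \<Rightarrow> bool" where
  "spanning_tree V E ends T \<longleftrightarrow> T \<subseteq> E \<and> is_forest ends T \<and> is_connected V ends T"

definition spanning_2forest :: "'v set \<Rightarrow> 'e set \<Rightarrow> ('e \<Rightarrow> 'v \<times> 'v) \<Rightarrow> 'e set \<Rightarrow> bool" where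
  "spanning_2forest V E ends F \<longleftrightarrow> F \<subseteq> E \<and> is_forest ends F \<and> card (components V ends F) = 2"

definition vertex_equivalent :: "'v set \<Rightarrow> ('e \<Rightarrow> 'v \<times> 'v) \<Rightarrow> 'e set \<Rightarrow> 'e set \<Rightarrow> bool" where
  "vertex_equivalent V ends F F' \<longleftrightarrow> components V ends F = components V ends F'"

end

theory Submission
  imports Defs
begin

lemma adj_sym: "sym (adj_rel ends F)"
  by (auto simp: sym_def adj_rel_def joins_def)

lemma rt_sym: "(x,y) \<in> (adj_rel ends F)\<^sup>* \<Longrightarrow> (y,x) \<in> (adj_rel ends F)\<^sup>*"
  by (rule symD[OF sym_rtrancl[OF adj_sym]])

lemma conn_equiv: "equiv V (conn V ends F)"
  unfolding equiv_def refl_on_def sym_def trans_def conn_def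
  using rt_sym by (auto intro: rtrancl_trans)

lemma adj_mono: "F \<subseteq> G \<Longrightarrow> adj_rel ends F \<subseteq> adj_rel ends G"
  by (auto simp: adj_rel_def)

lemma conn_mono: "F \<subseteq> G \<Longrightarrow> conn V ends F \<subseteq> conn V ends G"
  unfolding conn_def using rtrancl_mono[OF adj_mono] by blast

lemma walk:
  assumes "\<forall>k<length es. joins ends (es!k) (vs!k) (vs!Suc k)" "j \<le> l" "l \<le> length es"
    "\<forall>k. j \<le> k \<and> k < l \<longrightarrow> es!k \<in> F"
  shows "(vs!j, vs!l) \<in> (adj_rel ends F)\<^sup>*"
  using assms(2,3,4)
proof (induction l)
  case 0
  then show ?case by simp
next
  case (Suc l)
  show ?case
  proof (cases "j = Suc l")
    case True then show ?thesis by simp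
  next
    case False
    then have "(vs!j, vs!l) \<in> (adj_rel ends F)\<^sup>*" using Suc by simp
    moreover have "(vs!l, vs!Suc l) \<in> adj_rel ends F"
    proof -
      have "l < length es" "es!l \<in> F" using Suc.prems False by auto
      then show ?thesis using assms(1) unfolding adj_rel_def by blast
    qed
    ultimately show ?thesis by (rule rtrancl_into_rtrancl)
  qed
qed

lemma path_exists:
  assumes "(u,v) \<in> (adj_rel ends F)\<^sup>*"
  shows "\<exists>es vs. length vs = Suc (length es) \<and> distinct vs \<and> distinct es \<and> set es \<subseteq> F \<and>
     hd vs = u \<and> last vs = v \<and> (\<forall>i<length es. joins ends (es!i) (vs!i) (vs!Suc i))"
  using assms
proof (induction rule: converse_rtrancl_induct)
  case base
  show ?case by (rule exI[of _ "[]"], rule exI[of _ "[v]"]) simp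
next
  case (step y z)
  obtain f where f: "f \<in> F" "joins ends f y z" using step(1) unfolding adj_rel_def by auto
  obtain es vs where P: "length vs = Suc (length es)" "distinct vs" "distinct es" "set es \<subseteq> F"
     "hd vs = z" "last vs = v" "\<forall>i<length es. joins ends (es!i) (vs!i) (vs!Suc i)"
    using step(3) by blast
  show ?case
  proof (cases "y \<in> set vs")
    case True
    then obtain k where k: "k < length vs" "vs!k = y" by (auto simp: in_set_conv_nth)
    show ?thesis
    proof (rule exI[of _ "drop k es"], rule exI[of _ "drop k vs"], intro conjI)
      show "length (drop k vs) = Suc (length (drop k es))" using P(1) k by simp
      show "distinct (drop k vs)" using P(2) by simp
      show "distinct (drop k es)" using P(3) by simp
      show "set (drop k es) \<subseteq> F" using P(4) by (meson set_drop_subset subset_trans)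
      show "hd (drop k vs) = y" using k by (simp add: hd_drop_conv_nth)
      show "last (drop k vs) = v" using k P(6) by simp
      show "\<forall>i<length (drop k es). joins ends (drop k es ! i) (drop k vs ! i) (drop k vs ! Suc i)"
        using P(1,7) k by (auto simp: add.commute)
    qed
  next
    case False
    have vsne: "vs \<noteq> []" using P(1) by auto
    have fnot: "f \<notin> set es"
    proof
      assume "f \<in> set es"
      then obtain i where i: "i < length es" "es!i = f" by (auto simp: in_set_conv_nth)
      have "joins ends f (vs!i) (vs!Suc i)" using P(7) i by auto
      with f(2) have "y = vs!i \<or> y = vs!Suc i" by (auto simp: joins_def)
      moreover have "vs!i \<in> set vs" "vs!Suc i \<in> set vs" using i P(1) by auto
      ultimately show False using False by auto
    qed
    have hd0: "vs!0 = z" using P(5) vsne by (simp add: hd_conv_nth)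
    show ?thesis
    proof (rule exI[of _ "f # es"], rule exI[of _ "y # vs"], intro conjI)
      show "\<forall>i<length (f # es). joins ends ((f # es) ! i) ((y # vs) ! i) ((y # vs) ! Suc i)"
      proof (intro allI impI)
        fix i assume "i < length (f # es)"
        then show "joins ends ((f # es) ! i) ((y # vs) ! i) ((y # vs) ! Suc i)"
          using P(7) f(2) hd0 by (cases i) auto
      qed
    qed (use P False fnot f vsne in auto)
  qed
qed

lemma card2_eq: "finite S \<Longrightarrow> card S = 2 \<Longrightarrow> a \<in> S \<Longrightarrow> b \<in> S \<Longrightarrow> a \<noteq> b \<Longrightarrow> S = {a,b}"
  by (auto simp: card_2_iff)

lemma refine_eq:
  assumes eR: "equiv V R" and eR': "equiv V R'" and sub: "R' \<subseteq> R" and fin: "finite V"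
    and c: "card (V//R) = card (V//R')"
  shows "R = R'"
proof
  show "R' \<subseteq> R" by (rule sub)
  define g where "g = (\<lambda>C. R `` C)"
  have gx: "g (R'``{x}) = R``{x}" if "x \<in> V" for x
  proof
    show "g (R'``{x}) \<subseteq> R``{x}"
      using sub eR unfolding g_def equiv_def trans_def by blast
    show "R``{x} \<subseteq> g (R'``{x})"
      using eR' that unfolding g_def equiv_def refl_on_def by blast
  qed
  have img: "g ` (V//R') = V//R"
  proof
    show "g ` (V//R') \<subseteq> V//R" using gx by (auto simp: quotient_def)
    show "V//R \<subseteq> g ` (V//R')"
    proof
      fix C assume "C \<in> V//R"
      then obtain x where "x \<in> V" "C = R``{x}" by (auto simp: quotient_def)
      then show "C \<in> g ` (V//R')" using gx[of x] by (auto simp: quotient_def)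
    qed
  qed
  have finq: "finite (V//R')" unfolding quotient_def using fin by simp
  have inj: "inj_on g (V//R')"
    by (rule eq_card_imp_inj_on[OF finq]) (simp add: img c)
  show "R \<subseteq> R'"
  proof
    fix p assume p: "p \<in> R"
    obtain x y where xy: "p = (x,y)" by (cases p)
    have V: "x \<in> V" "y \<in> V" using p xy eR unfolding equiv_def refl_on_def by auto
    have "R``{x} = R``{y}" using p xy eR V by (simp add: eq_equiv_class_iff)
    then have "g (R'``{x}) = g (R'``{y})" using gx V by simp
    moreover have "R'``{x} \<in> V//R'" "R'``{y} \<in> V//R'" using V by (auto intro: quotientI)
    ultimately have "R'``{x} = R'``{y}" using inj by (meson inj_onD)
    then show "p \<in> R'" using xy V eR' by (simp add: eq_equiv_class_iff)
  qed
qed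

lemma conn_iff: "(x,y) \<in> conn V ends F \<longleftrightarrow> x \<in> V \<and> y \<in> V \<and> (x,y) \<in> (adj_rel ends F)\<^sup>*"
  by (simp add: conn_def)

theorem proposition2p2:
  fixes V :: "'v set" and E :: "'e set" and ends :: "'e \<Rightarrow> 'v \<times> 'v"
  assumes "multigraph V E ends"
    and "is_connected V ends E"
    and "spanning_2forest V E ends F"
    and "spanning_2forest V E ends F'"
  shows "\<not> vertex_equivalent V ends F F' \<longleftrightarrow>
         (\<exists>e\<in>F'. spanning_tree V E ends (F \<union> {e}))"
proof -
  define R where "R = conn V ends F"
  define R' where "R' = conn V ends F'"
  have eR: "equiv V R" and eR': "equiv V R'" unfolding R_def R'_def by (rule conn_equiv)+
  have finV: "finite V" and ends: "\<forall>e\<in>E. fst (ends e) \<in> V \<and> snd (ends e) \<in> V"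
    using assms(1) by (auto simp: multigraph_def)
  have FE: "F \<subseteq> E" and Ff: "is_forest ends F" and cF: "card (V//R) = 2"
    using assms(3) by (auto simp: spanning_2forest_def components_def R_def)
  have F'E: "F' \<subseteq> E" and cF': "card (V//R') = 2"
    using assms(4) by (auto simp: spanning_2forest_def components_def R'_def)
  show ?thesis
  proof
    assume nve: "\<not> vertex_equivalent V ends F F'"
    obtain e where e: "e \<in> F'" and ncon: "(fst (ends e), snd (ends e)) \<notin> R"
    proof (rule ccontr)
      assume "\<not> thesis"
      with that have H: "\<forall>e\<in>F'. (fst (ends e), snd (ends e)) \<in> R" by blast
      have adjR: "adj_rel ends F' \<subseteq> R"
      proof
        fix p assume "p \<in> adj_rel ends F'"
        then obtain x y e where "p = (x,y)" "e \<in> F'" "joins ends e x y"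
          unfolding adj_rel_def by auto
        then show "p \<in> R" using H eR unfolding joins_def equiv_def sym_def
          by (metis fst_conv snd_conv)
      qed
      have sub: "R' \<subseteq> R"
      proof
        fix p assume "p \<in> R'"
        then obtain x y where p: "p = (x,y)" "x \<in> V" "(x,y) \<in> (adj_rel ends F')\<^sup>*"
          unfolding R'_def conn_def by auto
        have "(x,y) \<in> R" using p(3)
        proof (induction rule: rtrancl_induct)
          case base then show ?case using p(2) eR unfolding equiv_def refl_on_def by auto
        next
          case (step y z)
          then show ?case using adjR eR unfolding equiv_def trans_def by blast
        qed
        then show "p \<in> R" using p by simp
      qed
      have "R = R'" by (rule refine_eq[OF eR eR' sub finV]) (simp add: cF cF')
      then show False using nve unfolding vertex_equivalent_def components_def R_def R'_def by simp
    qed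
    define u where "u = fst (ends e)"
    define v where "v = snd (ends e)"
    have uv: "u \<in> V" "v \<in> V" using ends e F'E unfolding u_def v_def by auto
    have je: "joins ends e u v" unfolding joins_def u_def v_def by simp
    have ncon': "(u,v) \<notin> (adj_rel ends F)\<^sup>*" using ncon uv unfolding u_def v_def R_def conn_def
      by auto
    have "spanning_tree V E ends (F \<union> {e})"
      unfolding spanning_tree_def
    proof (intro conjI)
      show "F \<union> {e} \<subseteq> E" using FE F'E e by auto
    next
      define R2 where "R2 = conn V ends (F \<union> {e})"
      have eR2: "equiv V R2" unfolding R2_def by (rule conn_equiv)
      have RR2: "R \<subseteq> R2" unfolding R_def R2_def by (rule conn_mono) auto
      have uvR2: "(u,v) \<in> R2" using uv je unfolding R2_def conn_def adj_rel_def by auto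
      have q: "V//R = {R``{u}, R``{v}}"
      proof (rule card2_eq)
        show "finite (V//R)" unfolding quotient_def using finV by simp
        show "card (V//R) = 2" by (rule cF)
        show "R``{u} \<in> V//R" "R``{v} \<in> V//R" using uv by (auto intro: quotientI)
        show "R``{u} \<noteq> R``{v}" using ncon uv eR unfolding u_def v_def
          by (simp add: eq_equiv_class_iff)
      qed
      have all: "(u,x) \<in> R2" if "x \<in> V" for x
      proof -
        have "R``{x} \<in> V//R" using that by (auto intro: quotientI)
        then have "R``{x} = R``{u} \<or> R``{x} = R``{v}" using q by auto
        then have "(u,x) \<in> R \<or> (v,x) \<in> R" using that uv eR
          by (metis eq_equiv_class_iff)
        then show ?thesis using RR2 uvR2 eR2 unfolding equiv_def trans_def by blast
      qed
      show "is_connected V ends (F \<union> {e})"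
        unfolding is_connected_def
      proof (intro conjI ballI)
        show "V \<noteq> {}" using uv by auto
        fix x y assume "x \<in> V" "y \<in> V"
        then show "(x, y) \<in> conn V ends (F \<union> {e})"
          using all eR2 unfolding R2_def[symmetric] equiv_def sym_def trans_def by blast
      qed
    next
      show "is_forest ends (F \<union> {e})"
        unfolding is_forest_def has_cycle_def
      proof
        assume "\<exists>es vs. es \<noteq> [] \<and> length vs = Suc (length es) \<and> distinct es \<and> set es \<subseteq> F \<union> {e} \<and>
          hd vs = last vs \<and> distinct (butlast vs) \<and> (\<forall>i<length es. joins ends (es ! i) (vs ! i) (vs ! Suc i))"
        then obtain es vs where C: "es \<noteq> []" "length vs = Suc (length es)" "distinct es"
          "set es \<subseteq> F \<union> {e}" "hd vs = last vs" "distinct (butlast vs)"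
          "\<forall>i<length es. joins ends (es ! i) (vs ! i) (vs ! Suc i)" by blast
        show False
        proof (cases "e \<in> set es")
          case False
          then have "set es \<subseteq> F" using C(4) by auto
          then have "has_cycle ends F" unfolding has_cycle_def using C by blast
          then show False using Ff unfolding is_forest_def by simp
        next
          case True
          then obtain i where i: "i < length es" "es!i = e" by (auto simp: in_set_conv_nth)
          have oth: "es!k \<in> F" if "k < length es" "k \<noteq> i" for k
          proof -
            have "es!k \<noteq> e" using C(3) i that by (metis nth_eq_iff_index_eq)
            then show ?thesis using C(4) that by (meson UnE nth_mem singletonD subsetD)
          qed
          have w1: "(vs!Suc i, vs!length es) \<in> (adj_rel ends F)\<^sup>*"
            by (rule walk[OF C(7)]) (use i oth in auto)
          have w2: "(vs!0, vs!i) \<in> (adj_rel ends F)\<^sup>*"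
            by (rule walk[OF C(7)]) (use i oth in auto)
          have "vs!0 = vs!length es" using C(2,5)
            by (metis diff_Suc_1 hd_conv_nth last_conv_nth list.size(3) nat.distinct(1))
          then have w: "(vs!Suc i, vs!i) \<in> (adj_rel ends F)\<^sup>*" using w1 w2 by simp
          have "joins ends e (vs!i) (vs!Suc i)" using C(7) i by auto
          then have "(vs!i = u \<and> vs!Suc i = v) \<or> (vs!i = v \<and> vs!Suc i = u)"
            unfolding joins_def u_def v_def by auto
          then have "(u,v) \<in> (adj_rel ends F)\<^sup>*" using w rt_sym by metis
          then show False using ncon' by simp
        qed
      qed
    qed
    then show "\<exists>e\<in>F'. spanning_tree V E ends (F \<union> {e})" using e by blast
  next
    assume "\<exists>e\<in>F'. spanning_tree V E ends (F \<union> {e})"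
    then obtain e where e: "e \<in> F'" and st: "spanning_tree V E ends (F \<union> {e})" by blast
    show "\<not> vertex_equivalent V ends F F'"
    proof
      assume ve: "vertex_equivalent V ends F F'"
      then have qq: "V//R' = V//R" unfolding vertex_equivalent_def components_def R_def R'_def by simp
      define u where "u = fst (ends e)"
      define v where "v = snd (ends e)"
      have uv: "u \<in> V" "v \<in> V" using ends e F'E unfolding u_def v_def by auto
      have je: "joins ends e u v" unfolding joins_def u_def v_def by simp
      have uvR': "(u,v) \<in> R'" using uv je e unfolding R'_def conn_def adj_rel_def by auto
      have "R'``{u} \<in> V//R" using uv qq by (metis quotientI)
      then obtain w where w: "w \<in> V" "R'``{u} = R``{w}" by (auto simp: quotient_def)
      have "u \<in> R'``{u}" "v \<in> R'``{u}" using uvR' uv eR' unfolding equiv_def refl_on_def by auto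
      then have "(w,u) \<in> R" "(w,v) \<in> R" using w by auto
      then have "(v,u) \<in> R" using eR unfolding equiv_def sym_def trans_def by blast
      then have vu: "(v,u) \<in> (adj_rel ends F)\<^sup>*" unfolding R_def conn_def by simp
      have fe: "is_forest ends (F \<union> {e})" and ce: "is_connected V ends (F \<union> {e})"
        using st by (auto simp: spanning_tree_def)
      show False
      proof (cases "e \<in> F")
        case True
        then have cc: "is_connected V ends F" using ce by (simp add: insert_absorb)
        have "V//R = {V}"
        proof -
          have "R``{x} = V" if "x \<in> V" for x
            using cc that eR unfolding is_connected_def R_def equiv_def refl_on_def by auto
          then show ?thesis using cc unfolding quotient_def is_connected_def by auto
        qed
        then show False using cF by simp
      next
        case False
        obtain es vs where P: "length vs = Suc (length es)" "distinct vs" "distinct es" "set es \<subseteq> F"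
          "hd vs = v" "last vs = u" "\<forall>i<length es. joins ends (es!i) (vs!i) (vs!Suc i)"
          using path_exists[OF vu] by blast
        have vsne: "vs \<noteq> []" using P(1) by auto
        have "has_cycle ends (F \<union> {e})"
          unfolding has_cycle_def
        proof (rule exI[of _ "es @ [e]"], rule exI[of _ "vs @ [v]"], intro conjI)
          show "\<forall>i<length (es @ [e]). joins ends ((es @ [e]) ! i) ((vs @ [v]) ! i) ((vs @ [v]) ! Suc i)"
          proof (intro allI impI)
            fix i assume i: "i < length (es @ [e])"
            show "joins ends ((es @ [e]) ! i) ((vs @ [v]) ! i) ((vs @ [v]) ! Suc i)"
            proof (cases "i < length es")
              case True
              then show ?thesis using P(1,7) by (simp add: nth_append)
            next
              case False
              then have ie: "i = length es" using i by simp
              have "vs ! length es = u" using P(1,6) vsne by (simp add: last_conv_nth)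
              then show ?thesis using ie P(1) je by (simp add: nth_append joins_def)
            qed
          qed
        qed (use P False vsne in \<open>auto simp: hd_append\<close>)
        then show False using fe unfolding is_forest_def by simp
      qed
    qed
  qed
qed

end
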